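(* Let $N\ge2$, $\lambda\in(0,1)$ and let $\varphi_1,\dots,\varphi_N\colon[0,1]\to[0,1]$ be bi-Lipschitz maps with Lipschitz constant at most $\lambda$; let $\Phi=\{\varphi_i\}_{i=1}^N$ and $U=\{(\mu_1,\dots,\mu_{N-1})\in\mathbb{R}^{N-1}:0<\mu_1<\cdots<\mu_{N-1}<1\}$. Then for Lebesgue almost every $\mu\in U$, the pair $(\Phi,\mu)$ has no singular connection.
   Context: For $\alpha=(i_0,\dots,i_{n-1})\in\{1,\dots,N\}^n$, $\varphi^\alpha=\varphi_{i_{n-1}}\circ\cdots\circ\varphi_{i_0}$. For $\mu\in U$, $(\Phi,\mu)$ has a singular connection if there are $n\ge1$, $\alpha\in\{1,\dots,N\}^n$ and $i,j\in\{1,\dots,N-1\}$ with $\varphi^\alpha(\mu_i)=\mu_j$. *)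

theory Defs
  imports "HOL-Analysis.Analysis"
begin

text \<open>The composition along a word alpha = [i_0, ..., i_(n-1)]:
  phi_{i_(n-1)} o ... o phi_{i_0} (phi_{i_0} applied first).\<close>
definition word_comp :: "(nat \<Rightarrow> real \<Rightarrow> real) \<Rightarrow> nat list \<Rightarrow> real \<Rightarrow> real" where
  "word_comp \<phi> \<alpha> = fold (\<lambda>i f. \<phi> i \<circ> f) \<alpha> id"

text \<open>The parameter set U, with mu represented as a function on the index set {1..N-1}.\<close>
definition param_set :: "nat \<Rightarrow> (nat \<Rightarrow> real) set" where
  "param_set N = {\<mu>. (\<forall>i\<in>{1..N-1}. 0 < \<mu> i \<and> \<mu> i < 1) \<and> (\<forall>i\<in>{1..<N-1}. \<mu> i < \<mu> (Suc i))}"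

definition singular_connection :: "nat \<Rightarrow> (nat \<Rightarrow> real \<Rightarrow> real) \<Rightarrow> (nat \<Rightarrow> real) \<Rightarrow> bool" where
  "singular_connection N \<phi> \<mu> \<longleftrightarrow>
     (\<exists>\<alpha>. \<alpha> \<noteq> [] \<and> set \<alpha> \<subseteq> {1..N} \<and>
        (\<exists>i\<in>{1..N-1}. \<exists>j\<in>{1..N-1}. word_comp \<phi> \<alpha> (\<mu> i) = \<mu> j))"

definition bi_lipschitz_on :: "real \<Rightarrow> real set \<Rightarrow> (real \<Rightarrow> real) \<Rightarrow> bool" where
  "bi_lipschitz_on L S f \<longleftrightarrow> L-lipschitz_on S f \<and>
     (\<exists>c>0. \<forall>x\<in>S. \<forall>y\<in>S. c * \<bar>x - y\<bar> \<le> \<bar>f x - f y\<bar>)"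

end

theory Submission
  imports Defs
begin

lemma psf_lborel: "product_sigma_finite (\<lambda>_::nat. lborel :: real measure)"
  by (simp add: product_sigma_finite_def sigma_finite_lborel)

lemma null_by_section:
  fixes I :: "nat set" and S :: "(nat \<Rightarrow> real) set"
  assumes fin: "finite I" and jI: "j \<in> I" and S: "S \<in> sets (PiM I (\<lambda>_. lborel))"
    and sec: "\<And>x. \<exists>Z\<in>null_sets lborel. {y. x(j:=y) \<in> S} \<subseteq> Z"
  shows "S \<in> null_sets (PiM I (\<lambda>_. lborel))"
proof -
  interpret product_sigma_finite "\<lambda>_::nat. lborel :: real measure" by (rule psf_lborel)
  have II: "insert j (I - {j}) = I" using jI by auto
  have meas: "indicator S \<in> borel_measurable (PiM (insert j (I - {j})) (\<lambda>_. lborel))"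
    using S II by simp
  have "emeasure (PiM I (\<lambda>_. lborel)) S = integral\<^sup>N (PiM I (\<lambda>_. lborel)) (indicator S)"
    using S by simp
  also have "\<dots> = (\<integral>\<^sup>+ x. (\<integral>\<^sup>+ y. indicator S (x(j := y)) \<partial>lborel) \<partial>(PiM (I - {j}) (\<lambda>_. lborel)))"
    using product_nn_integral_insert[OF _ _ meas] fin II by simp
  also have "\<dots> = (\<integral>\<^sup>+ x. 0 \<partial>(PiM (I - {j}) (\<lambda>_. lborel)))"
  proof -
  have "(\<integral>\<^sup>+ y. indicator S (x(j := y)) \<partial>lborel) = 0" for x :: "nat \<Rightarrow> real"
  proof -
    obtain Z where Z: "Z \<in> null_sets lborel" "{y. x(j:=y) \<in> S} \<subseteq> Z" using sec by blast
    have "(\<integral>\<^sup>+ y. indicator S (x(j := y)) \<partial>lborel) \<le> (\<integral>\<^sup>+ y. indicator Z y \<partial>lborel)"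
      by (rule nn_integral_mono) (use Z(2) in \<open>auto simp: indicator_def\<close>)
    also have "\<dots> = 0" using Z(1) null_setsD1[OF Z(1)] null_setsD2[OF Z(1)] by (simp del: nn_integral_indicator_singleton)
    finally show "(\<integral>\<^sup>+ y. indicator S (x(j := y)) \<partial>lborel) = 0" by simp
  qed
  then show ?thesis by simp
  qed
  finally show ?thesis using S by (simp add: null_sets_def)
qed

lemma word_comp_snoc: "word_comp \<phi> (\<alpha> @ [a]) = \<phi> a \<circ> word_comp \<phi> \<alpha>"
  by (simp add: word_comp_def)

lemma word_comp_props:
  assumes maps: "\<And>i. i \<in> {1..N} \<Longrightarrow> \<phi> i ` {0..1} \<subseteq> {0..1}"
    and lip: "\<And>i. i \<in> {1..N} \<Longrightarrow> lam-lipschitz_on {0..1} (\<phi> i)"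
    and lam: "0 \<le> lam"
    and set: "set \<alpha> \<subseteq> {1..N}"
  shows "word_comp \<phi> \<alpha> ` {0..1} \<subseteq> {0..1} \<and>
    (\<forall>x\<in>{0..1}. \<forall>y\<in>{0..1}. \<bar>word_comp \<phi> \<alpha> x - word_comp \<phi> \<alpha> y\<bar> \<le> lam ^ length \<alpha> * \<bar>x - y\<bar>)"
  using set
proof (induction \<alpha> rule: rev_induct)
  case Nil
  then show ?case by (simp add: word_comp_def)
next
  case (snoc a \<alpha>)
  then have IH: "word_comp \<phi> \<alpha> ` {0..1} \<subseteq> {0..1}"
    "\<And>x y. x\<in>{0..1} \<Longrightarrow> y\<in>{0..1} \<Longrightarrow> \<bar>word_comp \<phi> \<alpha> x - word_comp \<phi> \<alpha> y\<bar> \<le> lam ^ length \<alpha> * \<bar>x - y\<bar>"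
    and a: "a \<in> {1..N}" by auto
  show ?case
  proof
    show "word_comp \<phi> (\<alpha> @ [a]) ` {0..1} \<subseteq> {0..1}"
      using IH(1) maps[OF a] by (auto simp: word_comp_snoc)
    show "\<forall>x\<in>{0..1}. \<forall>y\<in>{0..1}. \<bar>word_comp \<phi> (\<alpha> @ [a]) x - word_comp \<phi> (\<alpha> @ [a]) y\<bar> \<le> lam ^ length (\<alpha> @ [a]) * \<bar>x - y\<bar>"
    proof (intro ballI)
      fix x y :: real assume x: "x \<in> {0..1}" and y: "y \<in> {0..1}"
      have gx: "word_comp \<phi> \<alpha> x \<in> {0..1}" and gy: "word_comp \<phi> \<alpha> y \<in> {0..1}" using IH(1) x y by (auto simp: image_subset_iff)
      have "\<bar>\<phi> a (word_comp \<phi> \<alpha> x) - \<phi> a (word_comp \<phi> \<alpha> y)\<bar> \<le> lam * \<bar>word_comp \<phi> \<alpha> x - word_comp \<phi> \<alpha> y\<bar>"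
        using lipschitz_onD[OF lip[OF a] gx gy] by (simp add: dist_real_def)
      also have "\<dots> \<le> lam * (lam ^ length \<alpha> * \<bar>x - y\<bar>)"
        using IH(2)[OF x y] lam by (simp add: mult_left_mono)
      finally show "\<bar>word_comp \<phi> (\<alpha> @ [a]) x - word_comp \<phi> (\<alpha> @ [a]) y\<bar> \<le> lam ^ length (\<alpha> @ [a]) * \<bar>x - y\<bar>"
        by (simp add: word_comp_snoc mult.assoc)
    qed
  qed
qed

theorem lemma4p3:
  fixes N :: nat and lam :: real and \<phi> :: "nat \<Rightarrow> real \<Rightarrow> real"
  assumes "N \<ge> 2" and "0 < lam" and "lam < 1"
    and "\<And>i. i \<in> {1..N} \<Longrightarrow> \<phi> i ` {0..1} \<subseteq> {0..1}"
    and "\<And>i. i \<in> {1..N} \<Longrightarrow> bi_lipschitz_on lam {0..1} (\<phi> i)"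
  shows "AE \<mu> in PiM {1..N-1} (\<lambda>_. lborel).
           \<mu> \<in> param_set N \<longrightarrow> \<not> singular_connection N \<phi> \<mu>"
proof -
  define M where "M = PiM {1..N-1} (\<lambda>_::nat. lborel :: real measure)"
  define A where "A = {\<alpha>::nat list. \<alpha> \<noteq> [] \<and> set \<alpha> \<subseteq> {1..N}}"
  define cl :: "real \<Rightarrow> real" where "cl x = max 0 (min 1 x)" for x
  have lip: "\<And>i. i \<in> {1..N} \<Longrightarrow> lam-lipschitz_on {0..1} (\<phi> i)"
    using assms(5) by (simp add: bi_lipschitz_on_def)
  have cA: "countable A" unfolding A_def
    by (rule countable_subset[of _ UNIV]) auto
  have key: "AE \<mu> in M. (0 < \<mu> i \<and> \<mu> i < 1 \<longrightarrow> word_comp \<phi> \<alpha> (\<mu> i) \<noteq> \<mu> j)"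
    if \<alpha>: "\<alpha> \<in> A" and i: "i \<in> {1..N-1}" and j: "j \<in> {1..N-1}" for \<alpha> i j
  proof -
    let ?g = "word_comp \<phi> \<alpha>"
    have P: "?g ` {0..1} \<subseteq> {0..1}"
      "\<And>x y. x\<in>{0..1} \<Longrightarrow> y\<in>{0..1} \<Longrightarrow> \<bar>?g x - ?g y\<bar> \<le> lam ^ length \<alpha> * \<bar>x - y\<bar>"
      using word_comp_props[where \<alpha>=\<alpha> and lam=lam and \<phi>=\<phi> and N=N, OF assms(4) lip] \<alpha> assms(2) by (auto simp: A_def)
    have "lam ^ length \<alpha> \<le> lam"
    proof -
      have "1 \<le> length \<alpha>" using \<alpha> by (cases \<alpha>) (auto simp: A_def)
      then show ?thesis using power_decreasing[of 1 "length \<alpha>" lam] assms(2,3) by simp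
    qed
    hence lamlen: "lam ^ length \<alpha> \<le> lam" .
    have glip: "(lam ^ length \<alpha>)-lipschitz_on {0..1} ?g"
      using P(2) assms(2) by (auto simp: lipschitz_on_def dist_real_def)
    have gc: "continuous_on {0..1} ?g" by (rule lipschitz_on_continuous_on[OF glip])
    have clc: "continuous_on UNIV cl" unfolding cl_def by (intro continuous_intros)
    have clr: "cl ` UNIV \<subseteq> {0..1}" by (auto simp: cl_def)
    have hc: "continuous_on UNIV (?g \<circ> cl)"
      by (rule continuous_on_compose[OF clc continuous_on_subset[OF gc clr]])
    have hm[measurable]: "(?g \<circ> cl) \<in> borel_measurable borel"
      by (rule borel_measurable_continuous_onI[OF hc])
    define S where "S = {\<mu>\<in>space M. \<mu> i \<in> {0..1} \<and> (?g \<circ> cl) (\<mu> i) = \<mu> j}"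
    have hm2[measurable]: "(\<lambda>x. (?g \<circ> cl) (x i)) \<in> borel_measurable M"
      unfolding M_def using i
      by (intro measurable_compose[of "\<lambda>x. x i" _ borel "?g \<circ> cl"] hm measurable_component_singleton) auto
    have hm3[measurable]: "(\<lambda>x. x j) \<in> borel_measurable M"
      unfolding M_def using j measurable_component_singleton[of j "{1..N-1}" "\<lambda>_. lborel"]
      by (simp add: measurable_lborel2)
    have hm4[measurable]: "(\<lambda>x. x i) \<in> borel_measurable M"
      unfolding M_def using i measurable_component_singleton[of i "{1..N-1}" "\<lambda>_. lborel"]
      by (simp add: measurable_lborel2)
    have e1: "{\<mu>\<in>space M. (?g \<circ> cl) (\<mu> i) = \<mu> j} \<in> sets M"
      by (rule measurable_equality_set[OF hm2 hm3])
    have e2: "{\<mu>\<in>space M. \<mu> i \<in> {0..1}} \<in> sets M"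
      using measurable_sets[OF hm4, of "{0..1}"] by (simp add: vimage_def Int_def conj_commute)
    have "S = {\<mu>\<in>space M. \<mu> i \<in> {0..1}} \<inter> {\<mu>\<in>space M. (?g \<circ> cl) (\<mu> i) = \<mu> j}"
      unfolding S_def by blast
    hence Sm: "S \<in> sets M" using e1 e2 by simp
    have Snull: "S \<in> null_sets M"
      unfolding M_def
    proof (rule null_by_section[OF _ j])
      show "S \<in> sets (PiM {1..N-1} (\<lambda>_. lborel))" using Sm M_def by simp
      fix x :: "nat \<Rightarrow> real"
      show "\<exists>Z\<in>null_sets lborel. {y. x(j:=y) \<in> S} \<subseteq> Z"
      proof (cases "i = j")
        case False
        show ?thesis
          by (rule bexI[of _ "{(?g \<circ> cl) (x i)}"]) (use False in \<open>auto simp: S_def\<close>)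
      next
        case True
        define F where "F = {y\<in>{0..1::real}. ?g y = y}"
        have sub: "F \<subseteq> {a}" if "a \<in> F" for a
        proof
          fix b assume b: "b \<in> F"
          have "\<bar>a - b\<bar> = \<bar>?g a - ?g b\<bar>" using that b by (simp add: F_def)
          also have "\<dots> \<le> lam ^ length \<alpha> * \<bar>a - b\<bar>" using P(2)[of a b] that b by (simp add: F_def)
          also have "\<dots> \<le> lam * \<bar>a - b\<bar>" using lamlen by (simp add: mult_right_mono)
          finally have "\<bar>a - b\<bar> \<le> lam * \<bar>a - b\<bar>" .
          with assms(3) have "\<bar>a - b\<bar> = 0"
            by (metis abs_ge_zero mult_le_cancel_right1 not_le order.strict_iff_order)
          then show "b \<in> {a}" by simp
        qed
        have "finite F"
        proof (cases "F = {}")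
          case False then obtain a where "a \<in> F" by blast
          then show ?thesis using sub finite_subset by blast
        qed simp
        moreover have "{y. x(j:=y) \<in> S} \<subseteq> F"
          using True by (auto simp: S_def F_def cl_def)
        ultimately show ?thesis using finite_imp_null_set_lborel by blast
      qed
    qed simp
    show ?thesis
    proof (rule AE_I'[OF Snull])
      show "{\<mu> \<in> space M. \<not> (0 < \<mu> i \<and> \<mu> i < 1 \<longrightarrow> ?g (\<mu> i) \<noteq> \<mu> j)} \<subseteq> S"
        by (auto simp: S_def cl_def)
    qed
  qed
  have "AE \<mu> in M. \<forall>\<alpha>\<in>A. \<forall>i\<in>{1..N-1}. \<forall>j\<in>{1..N-1}.
          (0 < \<mu> i \<and> \<mu> i < 1 \<longrightarrow> word_comp \<phi> \<alpha> (\<mu> i) \<noteq> \<mu> j)"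
    by (intro AE_ball_countable'[OF _ cA] AE_ball_countable'[OF _ countable_finite] key) auto
  then show ?thesis
    unfolding M_def[symmetric]
    by (rule eventually_mono) (auto simp: param_set_def singular_connection_def A_def)
qed

end
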